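(* Let $f$ be a positive function with $f(u)\to0$ as $u\to\infty$ which is eventually $C^1$, decreasing, and strictly convex. Suppose that either $f$ is regularly varying of index $-\alpha$ for some $0<\alpha\le 1$ (i.e. $f(\lambda u)/f(u)\to\lambda^{-\alpha}$ as $u\to\infty$ for every $\lambda>0$), or $f$ is slowly varying (i.e. $f(\lambda u)/f(u)\to1$ for every $\lambda>0$) and satisfies $\limsup_{u\to\infty}\frac{|f'((1+\delta)u)|}{|f'(u)|}<1$ for every $\delta>0$. Then for every $\lambda>1$ there exist $\delta>0$ and $x_0\ge1$ such that for all $x\ge x_0$ and all $u$ with $u\ge\lambda u_0(x)$ or $u\le(1/\lambda)u_0(x)$, \[h(u,x)-uf(u)\ge\omega(x)+\delta u_0(x).\]
   Context: $h(u,x)=f(u)\log x+u$, $\omega(x)=\inf_{u\ge0}h(u,x)$, and for $x$ sufficiently large $u_0(x)$ denotes the unique point at which $u\mapsto h(u,x)$ attains its minimum (the unique solution of $f'(u)=-1/\log x$), so $\omega(x)=h(u_0(x),x)$. *)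

theory Defs
  imports "HOL-Analysis.Analysis"
begin

definition h :: "(real \<Rightarrow> real) \<Rightarrow> real \<Rightarrow> real \<Rightarrow> real" where
  "h f u x = f u * ln x + u"

definition omega :: "(real \<Rightarrow> real) \<Rightarrow> real \<Rightarrow> real" where
  "omega f x = (INF u\<in>{0..}. h f u x)"

definition u0 :: "(real \<Rightarrow> real) \<Rightarrow> real \<Rightarrow> real" where
  "u0 f x = (THE u. u \<ge> 0 \<and> (\<forall>v\<ge>0. h f u x \<le> h f v x))"

definition strictly_convex_on :: "real set \<Rightarrow> (real \<Rightarrow> real) \<Rightarrow> bool" where
  "strictly_convex_on S f \<longleftrightarrow> convex S \<and>
     (\<forall>x\<in>S. \<forall>y\<in>S. \<forall>t. x \<noteq> y \<and> 0 < t \<and> t < 1 \<longrightarrow>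
        f ((1 - t) * x + t * y) < (1 - t) * f x + t * f y)"

definition regularly_varying :: "real \<Rightarrow> (real \<Rightarrow> real) \<Rightarrow> bool" where
  "regularly_varying \<alpha> f \<longleftrightarrow>
     (\<forall>l>0. ((\<lambda>u. f (l * u) / f u) \<longlongrightarrow> l powr (- \<alpha>)) at_top)"

definition slowly_varying :: "(real \<Rightarrow> real) \<Rightarrow> bool" where
  "slowly_varying f \<longleftrightarrow> (\<forall>l>0. ((\<lambda>u. f (l * u) / f u) \<longlongrightarrow> 1) at_top)"

end

theory Submission
  imports Defs
begin

lemma scD: "strictly_convex_on S f \<Longrightarrow> x \<in> S \<Longrightarrow> y \<in> S \<Longrightarrow> x \<noteq> y \<Longrightarrow> 0 < t \<Longrightarrow> t < 1 \<Longrightarrow>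
   f ((1 - t) * x + t * y) < (1 - t) * f x + t * f y"
  unfolding strictly_convex_on_def by blast

lemma tail_setup:
  fixes f :: "real \<Rightarrow> real"
  assumes "\<exists>U\<ge>0. (\<forall>u>U. f differentiable (at u))
            \<and> continuous_on {U<..} (deriv f)
            \<and> (\<forall>u v. U < u \<and> u \<le> v \<longrightarrow> f v \<le> f u)
            \<and> strictly_convex_on {U<..} f"
  obtains U where "U \<ge> 0" "convex_on {U<..} f"
    "\<And>u. u > U \<Longrightarrow> (f has_real_derivative deriv f u) (at u)"
    "\<And>u. u > U \<Longrightarrow> deriv f u < 0"
    "\<And>u v. U < u \<Longrightarrow> u \<le> v \<Longrightarrow> f v \<le> f u"
    "\<And>u v. U < u \<Longrightarrow> U < v \<Longrightarrow> f v \<ge> f u + deriv f u * (v - u)"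
proof -
  from assms obtain U where U: "U \<ge> 0" and d: "\<forall>u>U. f differentiable (at u)"
    and mono: "\<forall>u v. U < u \<and> u \<le> v \<longrightarrow> f v \<le> f u"
    and sc: "strictly_convex_on {U<..} f" by blast
  have cvx: "convex_on {U<..} f"
  proof (rule convex_on_linorderI)
    fix t x y :: real assume "0 < t" "t < 1" "x \<in> {U<..}" "y \<in> {U<..}" "x < y"
    then show "f ((1 - t) *\<^sub>R x + t *\<^sub>R y) \<le> (1 - t) * f x + t * f y"
      using sc unfolding strictly_convex_on_def by (auto intro: less_imp_le)
  qed simp
  have der: "(f has_real_derivative deriv f u) (at u)" if "u > U" for u
    using d that DERIV_deriv_iff_real_differentiable by blast
  have tan: "f v \<ge> f u + deriv f u * (v - u)" if "U < u" "U < v" for u v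
  proof -
    have "f v - f u \<ge> deriv f u * (v - u)"
      by (rule convex_on_imp_above_tangent[OF cvx]) (use that der in \<open>auto intro: has_field_derivative_at_within simp: interior_open\<close>)
    then show ?thesis by simp
  qed
  have neg: "deriv f u < 0" if "u > U" for u
  proof (rule ccontr)
    assume "\<not> deriv f u < 0"
    hence "deriv f u \<ge> 0" by simp
    have a: "f (u+1) \<ge> f u" using tan[of u "u+1"] that \<open>deriv f u \<ge> 0\<close> by auto
    have b: "f (u+2) \<ge> f u" using tan[of u "u+2"] that \<open>deriv f u \<ge> 0\<close> by auto
    have a': "f (u+1) \<le> f u" "f (u+2) \<le> f u" using mono that by auto
    have "f ((1 - 1/2) * u + (1/2) * (u+2)) < (1 - 1/2) * f u + (1/2) * f (u+2)"
      by (rule scD[OF sc]) (use that in auto)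
    moreover have "(1 - 1/2) * u + (1/2) * (u+2) = u + 1" by (simp add: field_simps)
    ultimately show False using a b a' by simp
  qed
  show ?thesis using that[OF U cvx der neg _ tan] mono by blast
qed

lemma key_reg:
  fixes f D :: "real \<Rightarrow> real"
  assumes U: "U \<ge> 0" and tan: "\<And>u v. U<u \<Longrightarrow> U<v \<Longrightarrow> f v \<ge> f u - D u * (v - u)"
    and pos: "\<forall>u\<ge>0. f u > 0" and a: "a > 0" and rv: "regularly_varying a f" and lam: "lam > 1"
  shows "\<exists>\<sigma>1>0. \<exists>\<sigma>2>0. \<exists>K>U. \<forall>u\<ge>K. f u - f (lam*u) \<le> (1-\<sigma>1)*(lam-1)*u*D u
            \<and> f (u/lam) - f u \<ge> (1+\<sigma>2)*(1-1/lam)*u*D u"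
proof -
  define \<mu> where "\<mu> = sqrt lam"
  have mu1: "\<mu> > 1" using lam by (simp add: \<mu>_def)
  have mumu: "\<mu> * \<mu> = lam" using lam by (simp add: \<mu>_def)
  define p where "p = \<mu> powr (-a)"
  define q where "q = \<mu> powr a"
  have p1: "p < 1" using mu1 a by (simp add: p_def powr_less_one)
  have p0: "p > 0" using mu1 by (simp add: p_def)
  have q1: "q > 1" using mu1 a unfolding q_def by (metis powr_less_mono powr_zero_eq_one less_trans zero_less_one)
  have r1: "((\<lambda>u. f (\<mu>*u) / f u) \<longlongrightarrow> p) at_top"
    using rv mu1 unfolding regularly_varying_def p_def by simp
  have r2: "((\<lambda>u. f (lam*u) / f u) \<longlongrightarrow> p*p) at_top"
  proof -
    have "lam powr (-a) = p * p" unfolding p_def using mu1 mumu[symmetric] by (simp add: powr_mult)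
    moreover have "((\<lambda>u. f (lam*u) / f u) \<longlongrightarrow> lam powr (-a)) at_top"
      using rv lam unfolding regularly_varying_def by simp
    ultimately show ?thesis by simp
  qed
  have r3: "((\<lambda>u. f (u/\<mu>) / f u) \<longlongrightarrow> q) at_top"
  proof -
    have "(1/\<mu>) powr (-a) = q" unfolding q_def using mu1 by (simp add: powr_minus_divide powr_divide)
    moreover have "((\<lambda>u. f (u/\<mu>) / f u) \<longlongrightarrow> (1/\<mu>) powr (-a)) at_top"
      using spec[OF rv[unfolded regularly_varying_def], of "1/\<mu>"] mu1 by simp
    ultimately show ?thesis by simp
  qed
  have r4: "((\<lambda>u. f (u/lam) / f u) \<longlongrightarrow> q*q) at_top"
  proof -
    have "(1/lam) powr (-a) = q*q" unfolding q_def using mu1 mumu[symmetric]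
      by (simp add: powr_minus_divide powr_divide powr_mult)
    moreover have "((\<lambda>u. f (u/lam) / f u) \<longlongrightarrow> (1/lam) powr (-a)) at_top"
      using spec[OF rv[unfolded regularly_varying_def], of "1/lam"] lam by simp
    ultimately show ?thesis by simp
  qed
  define \<sigma>1 where "\<sigma>1 = (\<mu> - p) / (2*(\<mu>+1))"
  define \<sigma>2 where "\<sigma>2 = (q*\<mu> - 1) / (2*(\<mu>+1))"
  have s1: "\<sigma>1 > 0" "\<sigma>1 < 1" using mu1 p1 p0 by (auto simp: \<sigma>1_def field_simps)
  have imu: "1/\<mu> < 1" "1/\<mu> > 0" using mu1 by auto
  have "q*\<mu> > 1" using q1 mu1 less_1_mult by blast
  hence s2a: "q*\<mu> - 1 > 0" "2*(\<mu>+1) > 0" using mu1 by auto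
  have s2: "\<sigma>2 > 0" unfolding \<sigma>2_def using s2a by (rule divide_pos_pos)
  define l1 where "l1 = (1-\<sigma>1)*(\<mu>+1)*(1 - p) - (1 - p*p)"
  define l2 where "l2 = (q*q - 1) - (1+\<sigma>2)*(1+1/\<mu>)*(q - 1)"
  have "l1 = (1-p)*(\<mu>-p)/2" using mu1 by (simp add: l1_def \<sigma>1_def field_simps; simp add: algebra_simps)
  moreover have "(1-p)*(\<mu>-p) > 0" using p1 mu1 by simp
  ultimately have l1p: "l1 > 0" by simp
  have l2e: "l2 = (q-1)*((q+1) - (1+\<sigma>2)*(1+1/\<mu>))" by (simp add: l2_def algebra_simps)
  have nz: "\<mu> \<noteq> 0" "\<mu> + 1 \<noteq> 0" using mu1 by auto
  have a1: "1+\<sigma>2 = (2*\<mu> + 1 + q*\<mu>)/(2*(\<mu>+1))" using nz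
    by (simp add: \<sigma>2_def field_simps)
  have a2: "1 + 1/\<mu> = (\<mu>+1)/\<mu>" using nz by (simp add: field_simps)
  have "(1+\<sigma>2)*(1+1/\<mu>) = (2*\<mu> + 1 + q*\<mu>)/(2*\<mu>)" unfolding a1 a2 using mu1
    by (simp add: divide_simps)
  moreover have "(2*\<mu> + 1 + q*\<mu>)/(2*\<mu>) < q + 1" using mu1 s2a by (simp add: divide_simps algebra_simps)
  ultimately have "(q+1) - (1+\<sigma>2)*(1+1/\<mu>) > 0" by simp
  hence "(q-1)*((q+1) - (1+\<sigma>2)*(1+1/\<mu>)) > 0" using q1 by simp
  moreover note l2e
  ultimately have l2p: "l2 > 0" by simp
  have t1: "((\<lambda>u. (1-\<sigma>1)*(\<mu>+1)*(1 - f (\<mu>*u) / f u) - (1 - f (lam*u) / f u)) \<longlongrightarrow> l1) at_top"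
    unfolding l1_def by (intro tendsto_intros r1 r2)
  have t2: "((\<lambda>u. (f (u/lam) / f u - 1) - (1+\<sigma>2)*(1+1/\<mu>)*(f (u/\<mu>) / f u - 1)) \<longlongrightarrow> l2) at_top"
    unfolding l2_def by (intro tendsto_intros r3 r4)
  have ev: "\<forall>\<^sub>F u in at_top. 0 < (1-\<sigma>1)*(\<mu>+1)*(1 - f (\<mu>*u) / f u) - (1 - f (lam*u) / f u)
      \<and> 0 < (f (u/lam) / f u - 1) - (1+\<sigma>2)*(1+1/\<mu>)*(f (u/\<mu>) / f u - 1)
      \<and> u > lam * (U + 1)"
    using order_tendstoD(1)[OF t1 l1p] order_tendstoD(1)[OF t2 l2p] eventually_gt_at_top
    by (intro eventually_conj) auto
  then obtain K0 where K0: "\<And>u. u \<ge> K0 \<Longrightarrow> 0 < (1-\<sigma>1)*(\<mu>+1)*(1 - f (\<mu>*u) / f u) - (1 - f (lam*u) / f u)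
      \<and> 0 < (f (u/lam) / f u - 1) - (1+\<sigma>2)*(1+1/\<mu>)*(f (u/\<mu>) / f u - 1)
      \<and> u > lam * (U + 1)"
    unfolding eventually_at_top_linorder by blast
  define K where "K = max K0 (U+1)"
  have main: "f u - f (lam*u) \<le> (1-\<sigma>1)*(lam-1)*u*D u
            \<and> f (u/lam) - f u \<ge> (1+\<sigma>2)*(1-1/lam)*u*D u" if "u \<ge> K" for u
  proof -
    have k: "0 < (1-\<sigma>1)*(\<mu>+1)*(1 - f (\<mu>*u) / f u) - (1 - f (lam*u) / f u)"
      "0 < (f (u/lam) / f u - 1) - (1+\<sigma>2)*(1+1/\<mu>)*(f (u/\<mu>) / f u - 1)"
      "u > lam * (U + 1)" using K0[of u] that by (auto simp: K_def)
    have "lam * (U+1) \<ge> U + 1" using lam U by simp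
    hence u0: "u > U + 1" using k(3) by linarith
    have fu: "f u > 0" using pos u0 U by auto
    have uml: "u / lam > U" using k(3) lam by (simp add: field_simps)
    have "u / lam \<le> u / \<mu>" using u0 U mu1 mumu[symmetric]
      by (intro divide_left_mono) (auto simp: less_imp_le mult_le_cancel_right1)
    hence umu: "u / \<mu> > U" using uml by linarith
    let ?F0 = "f u" let ?F1 = "f (\<mu>*u)" let ?F2 = "f (lam*u)" let ?F3 = "f (u/\<mu>)" let ?F4 = "f (u/lam)"
    have "u \<le> \<mu>*u" using u0 U mu1 by simp
    hence tA: "?F1 \<ge> ?F0 - D u * (\<mu>*u - u)" using tan[of u "\<mu>*u"] u0 by simp
    have tB: "?F3 \<ge> ?F0 - D u * (u/\<mu> - u)" using tan[of u "u/\<mu>"] u0 umu by auto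
    have A: "?F0 - ?F2 < (1-\<sigma>1)*(\<mu>+1)*(?F0 - ?F1)"
    proof -
      have "0 < ((1-\<sigma>1)*(\<mu>+1)*(1 - ?F1 / ?F0) - (1 - ?F2 / ?F0)) * ?F0" using k(1) fu by simp
      also have "\<dots> = (1-\<sigma>1)*(\<mu>+1)*(?F0 - ?F1) - (?F0 - ?F2)" using fu by (simp add: field_simps)
      finally show ?thesis by simp
    qed
    have B: "?F4 - ?F0 > (1+\<sigma>2)*(1+1/\<mu>)*(?F3 - ?F0)"
    proof -
      have "0 < ((?F4 / ?F0 - 1) - (1+\<sigma>2)*(1+1/\<mu>)*(?F3 / ?F0 - 1)) * ?F0" using k(2) fu by simp
      also have "\<dots> = (?F4 - ?F0) - (1+\<sigma>2)*(1+1/\<mu>)*(?F3 - ?F0)" using fu by (simp add: field_simps)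
      finally show ?thesis by simp
    qed
    have c1: "0 \<le> (1-\<sigma>1)*(\<mu>+1)" using s1 mu1 by simp
    have c2: "0 \<le> (1+\<sigma>2)*(1+1/\<mu>)" using s2 mu1 by simp
    have "?F0 - ?F1 \<le> (\<mu>-1)*u*D u" using tA by (simp add: algebra_simps)
    from mult_left_mono[OF this c1]
    have A2: "(1-\<sigma>1)*(\<mu>+1)*(?F0 - ?F1) \<le> (1-\<sigma>1)*(\<mu>+1)*((\<mu>-1)*u*D u)" .
    have "(1-1/\<mu>)*u*D u \<le> ?F3 - ?F0" using tB by (simp add: algebra_simps)
    from mult_left_mono[OF this c2]
    have B2: "(1+\<sigma>2)*(1+1/\<mu>)*(?F3 - ?F0) \<ge> (1+\<sigma>2)*(1+1/\<mu>)*((1-1/\<mu>)*u*D u)" .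
    have e1: "(1-\<sigma>1)*(\<mu>+1)*((\<mu>-1)*u*D u) = (1-\<sigma>1)*(lam-1)*u*D u"
      by (simp add: mumu[symmetric] algebra_simps)
    have e2: "(1+\<sigma>2)*(1+1/\<mu>)*((1-1/\<mu>)*u*D u) = (1+\<sigma>2)*(1-1/lam)*u*D u"
      using mu1 by (simp add: mumu[symmetric] field_simps)
    show ?thesis using A A2 e1 B B2 e2 by linarith
  qed
  have "K > U" by (simp add: K_def)
  then show ?thesis using main s1 s2 by blast
qed

lemma key_slow:
  fixes f :: "real \<Rightarrow> real"
  assumes U: "U \<ge> 0" and neg: "\<And>u. u > U \<Longrightarrow> deriv f u < 0"
    and tan: "\<And>u v. U<u \<Longrightarrow> U<v \<Longrightarrow> f v \<ge> f u - (- deriv f u) * (v - u)"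
    and ls: "\<forall>\<delta>>0. Limsup at_top
                  (\<lambda>u. ereal (\<bar>deriv f ((1 + \<delta>) * u)\<bar> / \<bar>deriv f u\<bar>)) < 1"
    and lam: "lam > 1"
  shows "\<exists>\<sigma>1>0. \<exists>\<sigma>2>0. \<exists>K>U. \<forall>u\<ge>K. f u - f (lam*u) \<le> (1-\<sigma>1)*(lam-1)*u*(- deriv f u)
            \<and> f (u/lam) - f u \<ge> (1+\<sigma>2)*(1-1/lam)*u*(- deriv f u)"
proof -
  define D where "D = (\<lambda>u. - deriv f u)"
  define \<mu> where "\<mu> = (1 + lam) / 2"
  have mu: "1 < \<mu>" "\<mu> < lam" using lam by (auto simp: \<mu>_def)
  have "Limsup at_top (\<lambda>u. ereal (\<bar>deriv f ((1 + (\<mu>-1)) * u)\<bar> / \<bar>deriv f u\<bar>)) < 1"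
    using spec[OF ls, of "\<mu>-1"] mu by simp
  hence "Limsup at_top (\<lambda>u. ereal (\<bar>deriv f (\<mu> * u)\<bar> / \<bar>deriv f u\<bar>)) < 1" by simp
  from ereal_dense2[OF this] obtain r where r: "Limsup at_top (\<lambda>u. ereal (\<bar>deriv f (\<mu> * u)\<bar> / \<bar>deriv f u\<bar>)) < ereal r" "ereal r < 1"
    by blast
  define \<rho> where "\<rho> = max r (1/2)"
  have rho: "0 < \<rho>" "\<rho> < 1" using r(2) by (auto simp: \<rho>_def)
  have "\<forall>\<^sub>F u in at_top. ereal (\<bar>deriv f (\<mu> * u)\<bar> / \<bar>deriv f u\<bar>) < ereal r"
    by (rule Limsup_lessD[OF r(1)])
  then obtain K1 where K1: "\<And>u. u \<ge> K1 \<Longrightarrow> \<bar>deriv f (\<mu> * u)\<bar> / \<bar>deriv f u\<bar> < \<rho>"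
    unfolding eventually_at_top_linorder \<rho>_def by fastforce
  have DP: "D u > 0" if "u > U" for u using neg[OF that] by (simp add: D_def)
  have ratio: "D (\<mu>*u) < \<rho> * D u" if "u \<ge> K1" "u > U" for u
  proof -
    have "u \<le> \<mu>*u" using that mu U by simp
    hence "\<mu>*u > U" using that by linarith
    then have "\<bar>deriv f (\<mu> * u)\<bar> = D (\<mu>*u)" "\<bar>deriv f u\<bar> = D u"
      using DP[of "\<mu>*u"] DP[of u] that by (auto simp: D_def)
    then have "D (\<mu>*u) / D u < \<rho>" using K1[OF that(1)] by simp
    then show ?thesis using DP[OF that(2)] by (simp add: divide_less_eq)
  qed
  define \<sigma>1 where "\<sigma>1 = (1-\<rho>)*(lam-\<mu>)/(lam-1)"
  define \<sigma>2 where "\<sigma>2 = (1/\<rho> - 1)*(1/\<mu> - 1/lam)/(1 - 1/lam)"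
  have s1: "\<sigma>1 > 0" unfolding \<sigma>1_def using rho mu lam by (intro divide_pos_pos mult_pos_pos) auto
  have ilm: "1/\<mu> - 1/lam > 0" "1 - 1/lam > 0" using mu lam by (auto simp: field_simps)
  have irho: "1/\<rho> - 1 > 0" using rho by (simp add: field_simps)
  have s2: "\<sigma>2 > 0" unfolding \<sigma>2_def using ilm irho by (intro divide_pos_pos mult_pos_pos) auto
  define K where "K = max (\<mu> * (max K1 U + 1)) (lam * (U + 1))"
  have main: "f u - f (lam*u) \<le> (1-\<sigma>1)*(lam-1)*u*D u
            \<and> f (u/lam) - f u \<ge> (1+\<sigma>2)*(1-1/lam)*u*D u" if "u \<ge> K" for u
  proof -
    have "u \<ge> \<mu> * (max K1 U + 1)" using that by (simp add: K_def)
    hence "u/\<mu> \<ge> max K1 U + 1" using mu by (simp add: field_simps)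
    hence uK1: "u/\<mu> \<ge> K1" "u/\<mu> > U" by auto
    have "u \<ge> lam * (U + 1)" using that by (simp add: K_def)
    hence "u \<ge> lam * U + lam" by (simp add: algebra_simps)
    moreover have "lam * U \<ge> U" using lam U by (simp add: mult_le_cancel_right1)
    ultimately have uU: "u > U" using lam by linarith
    have "u \<ge> lam * (U + 1)" using that by (simp add: K_def)
    hence ulam: "u/lam > U" using lam by (simp add: field_simps)
    have upos: "u > 0" using uU U by simp
    have "u \<le> \<mu>*u" "u \<le> lam*u" using upos mu lam by simp_all
    hence muu: "\<mu>*u > U" and lamu: "lam*u > U" using uU by linarith+
    have t1: "f (\<mu>*u) \<ge> f u - D u * (\<mu>*u - u)" using tan[OF uU muu] by (simp add: D_def)
    have t2: "f (lam*u) \<ge> f (\<mu>*u) - D (\<mu>*u) * (lam*u - \<mu>*u)" using tan[OF muu lamu] by (simp add: D_def)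
    have "u \<le> u*\<mu>" using upos mu by simp
    hence "u/\<mu> \<le> u" using mu by (simp add: divide_le_eq)
    hence rr: "D (\<mu>*u) < \<rho> * D u" using ratio[of u] uU uK1 by linarith
    have "D (\<mu>*u) * (lam*u - \<mu>*u) \<le> (\<rho> * D u) * (lam*u - \<mu>*u)"
      using rr mu upos by (intro mult_right_mono) (auto simp: field_simps)
    hence E1: "f u - f (lam*u) \<le> D u * (\<mu>*u - u) + (\<rho> * D u) * (lam*u - \<mu>*u)" using t1 t2 by linarith
    have e1: "D u * (\<mu>*u - u) + (\<rho> * D u) * (lam*u - \<mu>*u) = (1-\<sigma>1)*(lam-1)*u*D u"
      using lam by (simp add: \<sigma>1_def field_simps; simp add: algebra_simps)
    have t3: "f (u/lam) \<ge> f (u/\<mu>) - D (u/\<mu>) * (u/lam - u/\<mu>)" using tan[OF uK1(2) ulam] by (simp add: D_def)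
    have t4: "f (u/\<mu>) \<ge> f u - D u * (u/\<mu> - u)" using tan[OF uU uK1(2)] by (simp add: D_def)
    have rr2: "D u < \<rho> * D (u/\<mu>)" using ratio[OF uK1] mu by simp
    hence "D u / \<rho> < D (u/\<mu>)" using rho by (simp add: divide_less_eq mult.commute)
    moreover have "u/lam \<le> u/\<mu>" using upos mu by (intro divide_left_mono) auto
    ultimately have "(D u / \<rho>) * (u/\<mu> - u/lam) \<le> D (u/\<mu>) * (u/\<mu> - u/lam)"
      by (intro mult_right_mono) auto
    hence E2: "f (u/lam) - f u \<ge> (D u / \<rho>) * (u/\<mu> - u/lam) + D u * (u - u/\<mu>)"
      using t3 t4 by (simp add: algebra_simps)
    have e2: "(D u / \<rho>) * (u/\<mu> - u/lam) + D u * (u - u/\<mu>) = (1+\<sigma>2)*(1-1/lam)*u*D u"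
      using lam rho mu by (simp add: \<sigma>2_def field_simps; simp add: algebra_simps)
    show ?thesis using E1 e1 E2 e2 by simp
  qed
  have "lam * (U+1) \<ge> U + 1" using lam U by simp
  hence "K > U" unfolding K_def by linarith
  then show ?thesis using main s1 s2 unfolding D_def by blast
qed

lemma ln_ge_of_exp: fixes x T :: real assumes a: "x \<ge> exp T" shows "ln x \<ge> T"
proof -
  have x: "0 < x" using exp_gt_zero[of T] a by linarith
  show ?thesis using a x by (simp add: ln_ge_iff)
qed

lemma u0_props:
  assumes "\<exists>!u. u \<ge> 0 \<and> (\<forall>v\<ge>0. h f u x \<le> h f v x)"
  shows "u0 f x \<ge> 0" "\<forall>v\<ge>0. h f (u0 f x) x \<le> h f v x" "omega f x = h f (u0 f x) x"
proof -
  have P: "u0 f x \<ge> 0 \<and> (\<forall>v\<ge>0. h f (u0 f x) x \<le> h f v x)"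
    unfolding u0_def by (rule theI'[OF assms])
  then show "u0 f x \<ge> 0" "\<forall>v\<ge>0. h f (u0 f x) x \<le> h f v x" by auto
  have m: "h f (u0 f x) x \<in> (\<lambda>u. h f u x) ` {0..}" using P by simp
  have l: "\<And>y. y \<in> (\<lambda>u. h f u x) ` {0..} \<Longrightarrow> h f (u0 f x) x \<le> y" using P by force
  show "omega f x = h f (u0 f x) x" unfolding omega_def
    by (rule cInf_eq_minimum[OF m l])
qed

locale setting =
  fixes f :: "real \<Rightarrow> real" and X1 :: real
  assumes X1: "X1 \<ge> exp 1"
    and pos: "\<forall>u\<ge>0. f u > 0"
    and lim0: "(f \<longlongrightarrow> 0) at_top"
    and mins: "\<And>x. x \<ge> X1 \<Longrightarrow> u0 f x \<ge> 0 \<and> (\<forall>v\<ge>0. h f (u0 f x) x \<le> h f v x)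
                  \<and> omega f x = h f (u0 f x) x"
begin

abbreviation "uu x \<equiv> u0 f x"
abbreviation "om x \<equiv> omega f x"

lemma lnx: "x \<ge> X1 \<Longrightarrow> ln x \<ge> 1"
  using X1 ln_ge_of_exp[of 1 x] by linarith

lemma b1: "x \<ge> X1 \<Longrightarrow> uu x \<ge> 0" using mins by (rule conjunct1)

lemma b2: assumes "x \<ge> X1" "v \<ge> 0" shows "f (uu x) * ln x + uu x \<le> f v * ln x + v"
proof -
  have "\<forall>v\<ge>0. h f (uu x) x \<le> h f v x" using mins[OF assms(1)] by (rule conjunct1[OF conjunct2])
  then have "h f (uu x) x \<le> h f v x" using assms(2) by simp
  then show ?thesis unfolding h_def .
qed

lemma b3: assumes "x \<ge> X1" shows "om x = f (uu x) * ln x + uu x"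
proof -
  have "om x = h f (uu x) x" using mins[OF assms(1)] by (rule conjunct2[OF conjunct2])
  then show ?thesis unfolding h_def .
qed

lemma b5: assumes x: "x \<ge> X1" shows "uu x \<le> om x" "om x > 0"
proof -
  have "f (uu x) > 0" using pos b1[OF x] by blast
  moreover have "ln x \<ge> 1" using lnx[OF x] .
  ultimately have "f (uu x) * ln x > 0" by simp
  then show "uu x \<le> om x" "om x > 0" using b3[OF x] b1[OF x] by linarith+
qed

lemma b6: assumes "X1 \<le> x" "x \<le> x'" shows "uu x \<le> uu x'" "om x \<le> om x'"
proof -
  have xp: "x > 0" "x' > 0" using assms X1 exp_gt_zero[of 1] by linarith+
  have l: "ln x \<le> ln x'" using assms(2) xp by simp
  have l0: "ln x \<ge> 0" using lnx[OF assms(1)] by simp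
  have x': "x' \<ge> X1" using assms by simp
  have i1: "f (uu x) * ln x + uu x \<le> f (uu x') * ln x + uu x'" using b2[OF assms(1) b1[OF x']] .
  have i2: "f (uu x') * ln x' + uu x' \<le> f (uu x) * ln x' + uu x" using b2[OF x' b1[OF assms(1)]] .
  show "uu x \<le> uu x'"
  proof (cases "x = x'")
    case True
    then show ?thesis by simp
  next
    case False
    then have "x < x'" using assms(2) by linarith
    then have lt: "ln x < ln x'" using xp by simp
    have e: "(f (uu x) - f (uu x')) * (ln x - ln x') = (f (uu x) * ln x + f (uu x') * ln x') - (f (uu x') * ln x + f (uu x) * ln x')"
      by (simp add: algebra_simps)
    have "(f (uu x) - f (uu x')) * (ln x - ln x') \<le> 0" unfolding e using i1 i2 by linarith
    then have ff: "f (uu x) \<ge> f (uu x')"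
    proof (rule contrapos_pp)
      assume "\<not> f (uu x') \<le> f (uu x)"
      then have a: "f (uu x) - f (uu x') < 0" by linarith
      have b: "ln x - ln x' < 0" using lt by linarith
      have "0 < (f (uu x) - f (uu x')) * (ln x - ln x')" by (rule mult_neg_neg[OF a b])
      then show "\<not> (f (uu x) - f (uu x')) * (ln x - ln x') \<le> 0" by linarith
    qed
    have "f (uu x') - f (uu x) \<le> 0" using ff by linarith
    hence "(f (uu x') - f (uu x)) * ln x \<le> 0" using l0 by (rule mult_nonpos_nonneg)
    moreover have "(f (uu x') - f (uu x)) * ln x = f (uu x') * ln x - f (uu x) * ln x" by (simp add: algebra_simps)
    ultimately show ?thesis using i1 by linarith
  qed
  have fp: "f (uu x') \<ge> 0" using pos b1[OF x'] less_imp_le by blast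
  have "om x = f (uu x) * ln x + uu x" using b3[OF assms(1)] .
  also have "\<dots> \<le> f (uu x') * ln x + uu x'" using i1 .
  also have "\<dots> \<le> f (uu x') * ln x' + uu x'" using mult_left_mono[OF l fp] by simp
  also have "\<dots> = om x'" using b3[OF x'] by simp
  finally show "om x \<le> om x'" .
qed

lemma b7: assumes "\<epsilon> > 0" shows "\<exists>v\<ge>0. \<forall>x\<ge>X1. om x \<le> \<epsilon> * ln x + v"
proof -
  have "\<forall>\<^sub>F u in at_top. f u < \<epsilon>" using order_tendstoD(2)[OF lim0 assms] .
  then obtain v0 where v0: "\<And>u. u \<ge> v0 \<Longrightarrow> f u < \<epsilon>" unfolding eventually_at_top_linorder by blast
  define v where "v = max v0 0"
  have "om x \<le> \<epsilon> * ln x + v" if x: "x \<ge> X1" for x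
  proof -
    have v: "v \<ge> 0" "v \<ge> v0" unfolding v_def by auto
    have "om x \<le> f v * ln x + v" using b3[OF x] b2[OF x v(1)] by simp
    moreover have "f v * ln x \<le> \<epsilon> * ln x"
      using mult_right_mono[OF less_imp_le[OF v0[OF v(2)]], of "ln x"] lnx[OF x] by linarith
    ultimately show ?thesis by linarith
  qed
  moreover have "v \<ge> 0" unfolding v_def by auto
  ultimately show ?thesis by (intro exI[of _ v]) simp
qed

end

context setting begin

lemma sup_facts:
  fixes g :: "real \<Rightarrow> real"
  assumes M: "\<And>x. x \<ge> X1 \<Longrightarrow> g x \<le> M" and s: "s = (SUP x\<in>{X1..}. g x)"
  shows "\<And>x. x \<ge> X1 \<Longrightarrow> g x \<le> s"
    "s \<le> M"
    "\<And>a. a < s \<Longrightarrow> \<exists>x\<ge>X1. a < g x"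
  unfolding s
proof -
  have bdd: "bdd_above (g ` {X1..})" using M by (intro bdd_aboveI2) auto
  have ne: "{X1..} \<noteq> {}" by auto
  show "\<And>x. x \<ge> X1 \<Longrightarrow> g x \<le> (SUP x\<in>{X1..}. g x)" using bdd by (intro cSUP_upper) auto
  show "(SUP x\<in>{X1..}. g x) \<le> M" using ne M by (intro cSUP_least) auto
  show "\<And>a. a < (SUP x\<in>{X1..}. g x) \<Longrightarrow> \<exists>x\<ge>X1. a < g x"
    using less_cSUP_iff[OF ne bdd] by auto
qed



lemma W_bound:
  assumes B: "\<And>x. x \<ge> X1 \<Longrightarrow> uu x \<le> B" and x: "x \<ge> X1"
  shows "om x \<le> B + 1"
proof -
  define Lx where "Lx = ln x"
  have L1: "Lx \<ge> 1" using lnx[OF x] by (simp add: Lx_def)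
  have e: "1/(2*Lx) > 0" using L1 by simp
  obtain v where v: "v \<ge> 0" "\<And>y. y \<ge> X1 \<Longrightarrow> om y \<le> (1/(2*Lx)) * ln y + v"
    using b7[OF e] by blast
  define y where "y = max X1 (exp (2*Lx * v))"
  have y: "y \<ge> X1" by (simp add: y_def)
  have ly: "ln y \<ge> 2*Lx * v" using ln_ge_of_exp[of "2*Lx * v" y] by (simp add: y_def)
  have ly1: "ln y \<ge> 1" using lnx[OF y] .
  have vle: "v \<le> ln y / (2*Lx)" using ly L1 by (simp add: field_simps)
  have "f (uu y) * ln y \<le> om y" using b3[OF y] b1[OF y] by linarith
  also have "\<dots> \<le> (1/(2*Lx)) * ln y + v" using v(2)[OF y] .
  also have "\<dots> \<le> ln y / Lx" using vle L1 by (simp add: field_simps)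
  finally have "f (uu y) * ln y \<le> ln y / Lx" .
  hence "f (uu y) * ln y \<le> (1 / Lx) * ln y" by simp
  hence "f (uu y) \<le> 1 / Lx" by (rule mult_right_le_imp_le) (use ly1 in simp)
  hence fl: "f (uu y) * Lx \<le> 1" using L1 by (simp add: field_simps)
  have "om x \<le> f (uu y) * Lx + uu y" using b3[OF x] b2[OF x b1[OF y]] by (simp add: Lx_def)
  also have "\<dots> \<le> 1 + B" using fl B[OF y] by linarith
  finally show ?thesis by simp
qed

lemma bounded_case:
  assumes Bnd: "\<And>x. x \<ge> X1 \<Longrightarrow> uu x \<le> B" and lam: "lam > 1"
  shows "\<exists>\<delta>>0. \<exists>x0\<ge>1. \<forall>x\<ge>x0. \<forall>u\<ge>0. (u \<ge> lam * uu x \<or> u \<le> uu x / lam) \<longrightarrow>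
           h f u x - u * f u \<ge> om x + \<delta> * uu x"
proof -
  define W where "W = B + 1"
  have Wb: "\<And>x. x \<ge> X1 \<Longrightarrow> om x \<le> W" using W_bound[OF Bnd] by (simp add: W_def)
  have X1ge: "X1 \<ge> 1" using X1 exp_ge_add_one_self[of 1] by linarith
  have B0: "B \<ge> 0" using Bnd[of X1] b1[of X1] by simp
  define \<Omega> where "\<Omega> = (SUP x\<in>{X1..}. om x)"
  define S where "S = (SUP x\<in>{X1..}. uu x)"
  have ne: "{X1..} \<noteq> {}" by auto
  have Sbdd: "bdd_above ((\<lambda>x. uu x) ` {X1..})" using Bnd by (intro bdd_aboveI2) auto
  have Sf1: "\<And>x. x \<ge> X1 \<Longrightarrow> uu x \<le> S" unfolding S_def using Sbdd by (intro cSUP_upper) auto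
  have Sf3: "\<And>a. a < S \<Longrightarrow> \<exists>x\<ge>X1. a < uu x" unfolding S_def using less_cSUP_iff[OF ne Sbdd] by auto
  have Obdd: "bdd_above ((\<lambda>x. om x) ` {X1..})" using Wb by (intro bdd_aboveI2) auto
  have Om1: "\<And>x. x \<ge> X1 \<Longrightarrow> om x \<le> \<Omega>" unfolding \<Omega>_def using Obdd by (intro cSUP_upper) auto
  have Om3: "\<And>a. a < \<Omega> \<Longrightarrow> \<exists>x\<ge>X1. a < om x" unfolding \<Omega>_def using less_cSUP_iff[OF ne Obdd] by auto
  have Om0: "\<Omega> > 0" using Om1[of X1] b5(2)[of X1] by simp
  define x4 where "x4 = max X1 (exp ((W+1) / f 0))"
  have x4: "x4 \<ge> X1" by (simp add: x4_def)
  have f00: "f 0 > 0" using pos by simp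
  have "ln x4 \<ge> (W+1) / f 0" using ln_ge_of_exp[of "(W+1) / f 0" x4] by (simp add: x4_def)
  hence l4: "f 0 * ln x4 \<ge> W + 1" using f00 by (simp add: field_simps)
  have "uu x4 \<noteq> 0"
  proof
    assume "uu x4 = 0"
    hence "om x4 = f 0 * ln x4" using b3[OF x4] by simp
    thus False using l4 Wb[OF x4] by simp
  qed
  hence S0: "S > 0" using b1[OF x4] Sf1[OF x4] by simp
  have ilam: "1/lam < 1" "1/lam > 0" using lam by auto
  have "S * (1 + 1/lam) / 2 < S" using S0 ilam by (simp add: field_simps)
  then obtain x2 where x2: "x2 \<ge> X1" "S * (1 + 1/lam) / 2 < uu x2" using Sf3 by blast
  define gap where "gap = uu x2 - S / lam"
  have "S * (1 + 1/lam) / 2 - S / lam = S * (1 - 1/lam) / 2" by (simp add: field_simps)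
  moreover have "S * (1 - 1/lam) / 2 > 0" using S0 ilam by simp
  ultimately have gap0: "gap > 0" using x2(2) unfolding gap_def by linarith
  define c where "c = gap / ln x2"
  have lx2: "ln x2 \<ge> 1" using lnx[OF x2(1)] .
  have c0: "c > 0" using gap0 lx2 by (simp add: c_def)
  have fc: "f u \<ge> c" if "u \<ge> 0" "u \<le> S / lam" for u
  proof -
    have "f (uu x2) * ln x2 + uu x2 \<le> f u * ln x2 + u" using b2[OF x2(1) that(1)] .
    moreover have "f (uu x2) * ln x2 \<ge> 0"
    proof -
      have "f (uu x2) > 0" using pos b1[OF x2(1)] by blast
      thus ?thesis using lx2 by simp
    qed
    ultimately have "gap \<le> f u * ln x2" using that(2) unfolding gap_def by linarith
    hence "gap / ln x2 \<le> f u" using lx2 by (simp add: field_simps)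
    thus ?thesis by (simp add: c_def)
  qed
  define \<kappa> where "\<kappa> = min (\<Omega>/6) ((lam-1)*\<Omega>/8)"
  have k0: "\<kappa> > 0" using Om0 lam by (simp add: \<kappa>_def)
  have k1: "\<kappa> \<le> \<Omega>/6" "\<kappa> \<le> (lam-1)*\<Omega>/8" by (simp_all add: \<kappa>_def)
  obtain x3 where x3: "x3 \<ge> X1" "\<Omega> - \<kappa> < om x3" using Om3[of "\<Omega> - \<kappa>"] k0 by auto
  have x31: "x3 \<ge> 1" using x3 X1ge by linarith
  have parti: "om x \<le> uu x + (lam-1)/2 * uu x" if x: "x \<ge> x3 * x3" for x
  proof -
    have "x3 \<le> x3 * x3" using x31 by simp
    hence xX: "x \<ge> X1" "x \<ge> x3" using x x3 by linarith+
    have xp: "x > 0" using xX x31 by linarith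
    define y where "y = sqrt x"
    have "x3^2 \<le> x" using x by (simp add: power2_eq_square)
    hence yx3: "y \<ge> x3" unfolding y_def by (rule real_le_rsqrt)
    have yX: "y \<ge> X1" using yx3 x3 by linarith
    have ly: "ln y = ln x / 2" unfolding y_def using xp by (simp add: ln_sqrt)
    have "om y \<le> f (uu x) * ln y + uu x" using b3[OF yX] b2[OF yX b1[OF xX(1)]] by simp
    also have "\<dots> = om x - f (uu x) * ln x / 2" using b3[OF xX(1)] ly by simp
    finally have o1: "om y \<le> om x - f (uu x) * ln x / 2" .
    have o2: "om y \<ge> om x3" using b6(2)[OF x3(1) yx3] .
    have o3: "om x \<le> \<Omega>" using Om1[OF xX(1)] .
    have o4: "om x \<ge> om x3" using b6(2)[OF x3(1) xX(2)] .
    have fl: "f (uu x) * ln x \<le> 2 * \<kappa>" using o1 o2 o3 x3(2) by linarith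
    have u1: "uu x = om x - f (uu x) * ln x" using b3[OF xX(1)] by simp
    have um: "uu x \<ge> \<Omega> / 2" using u1 fl o4 x3(2) k1(1) by linarith
    have "(lam-1)*\<Omega>/4 \<le> (lam-1)/2 * uu x" using um lam
      using mult_left_mono[OF um, of "(lam-1)/2"] by (simp add: field_simps)
    thus ?thesis using u1 fl k1(2) by linarith
  qed
  have "\<forall>\<^sub>F u in at_top. f u < 1/2" using order_tendstoD(2)[OF lim0, of "1/2"] by simp
  then obtain V0 where V0: "\<And>u. u \<ge> V0 \<Longrightarrow> f u < 1/2" unfolding eventually_at_top_linorder by blast
  define V where "V = max V0 0"
  have V: "\<And>u. u \<ge> V \<Longrightarrow> f u < 1/2" "V \<ge> 0" using V0 by (auto simp: V_def)
  define \<delta> where "\<delta> = (lam - 1)/2"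
  have d0: "\<delta> > 0" using lam by (simp add: \<delta>_def)
  define R where "R = W + \<delta> * B"
  define x0 where "x0 = max (max X1 (x3 * x3)) (max (exp V) (max (exp (2 * R)) (exp (B + R / c))))"
  have x0X: "x0 \<ge> X1" "x0 \<ge> x3 * x3" by (simp_all add: x0_def)
  have main: "h f u x - u * f u \<ge> om x + \<delta> * uu x"
    if x: "x \<ge> x0" and u: "u \<ge> 0" and uc: "u \<ge> lam * uu x \<or> u \<le> uu x / lam" for x u
  proof -
    have xX: "x \<ge> X1" using x x0X by linarith
    have lV: "ln x \<ge> V" using ln_ge_of_exp[of V x] x by (simp add: x0_def)
    have lR: "ln x \<ge> 2 * R" using ln_ge_of_exp[of "2*R" x] x by (simp add: x0_def)
    have lc: "ln x \<ge> B + R / c" using ln_ge_of_exp[of "B + R/c" x] x by (simp add: x0_def)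
    have ux: "uu x \<ge> 0" "uu x \<le> B" using b1[OF xX] Bnd[OF xX] by auto
    have oR: "om x + \<delta> * uu x \<le> R" unfolding R_def
      using Wb[OF xX] mult_left_mono[OF ux(2) less_imp_le[OF d0]] by linarith
    have hx: "h f u x - u * f u = f u * (ln x - u) + u" by (simp add: h_def algebra_simps)
    have fu0: "f u > 0" using pos u by simp
    show ?thesis
    proof (cases "u \<le> uu x / lam")
      case True
      have uS: "u \<le> S / lam" using True Sf1[OF xX] lam by (smt (verit) divide_right_mono)
      have fcu: "f u \<ge> c" using fc[OF u uS] .
      have uB: "u \<le> B"
      proof -
        have "uu x / lam \<le> uu x" using ux(1) lam by (simp add: divide_le_eq mult_le_cancel_left1)
        thus ?thesis using True ux(2) by linarith
      qed
      have lB: "ln x - u \<ge> R / c" using lc uB by linarith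
      have Rc: "R / c \<ge> 0" using oR ux(1) d0 Wb[OF xX] b5(2)[OF xX] c0
        by (smt (verit) divide_nonneg_pos mult_nonneg_nonneg)
      have "f u * (ln x - u) \<ge> c * (R / c)"
        using mult_mono[OF fcu lB] c0 Rc fu0 by linarith
      hence "f u * (ln x - u) \<ge> R" using c0 by simp
      thus ?thesis using hx oR u by linarith
    next
      case False
      hence ul: "u \<ge> lam * uu x" using uc by simp
      show ?thesis
      proof (cases "u \<le> ln x")
        case True
        have "f u * (ln x - u) \<ge> 0" using fu0 True by simp
        moreover have "om x \<le> uu x + (lam-1)/2 * uu x"
          using x x0X(2) by (intro parti) linarith
        moreover have "lam * uu x = uu x + (lam - 1) * uu x" by (simp add: algebra_simps)
        ultimately show ?thesis using hx ul unfolding \<delta>_def by linarith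
      next
        case False
        hence uV: "u \<ge> V" using lV by linarith
        have fh: "f u < 1/2" using V(1)[OF uV] .
        have "h f u x - u * f u = f u * ln x + u * (1 - f u)" by (simp add: h_def algebra_simps)
        moreover have "f u * ln x \<ge> 0" using fu0 lV V(2) by simp
        moreover have "u * (1 - f u) \<ge> u * (1/2)" using fh u by (intro mult_left_mono) auto
        ultimately have "h f u x - u * f u \<ge> u / 2" by linarith
        thus ?thesis using False lR oR by linarith
      qed
    qed
  qed
  have "x0 \<ge> 1" using x0X X1ge by linarith
  thus ?thesis using main d0 by blast
qed

end

lemma cvx3:
  fixes G :: "real \<Rightarrow> real"
  assumes cv: "convex_on S G" and a: "a \<in> S" and c: "c \<in> S" and ab: "a < b" and bc: "b < c"
  shows "G b * (c - a) \<le> (c - b) * G a + (b - a) * G c"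
proof -
  define t where "t = (b - a) / (c - a)"
  have t: "t \<ge> 0" "t \<le> 1" using ab bc by (auto simp: t_def field_simps)
  have tc: "t * (c - a) = b - a" using ab bc by (simp add: t_def)
  have "(1 - t) * a + t * c = a + t * (c - a)" by (simp add: algebra_simps)
  hence bt: "(1 - t) * a + t * c = b" using tc by simp
  have "G ((1 - t) *\<^sub>R a + t *\<^sub>R c) \<le> (1 - t) * G a + t * G c"
    by (rule convex_onD[OF cv t a c])
  hence "G b \<le> (1 - t) * G a + t * G c" using bt by simp
  hence "G b * (c - a) \<le> ((1 - t) * G a + t * G c) * (c - a)"
    using ab bc by (intro mult_right_mono) auto
  also have "\<dots> = ((c - a) - t * (c - a)) * G a + (t * (c - a)) * G c" by (simp add: algebra_simps)
  also have "\<dots> = (c - b) * G a + (b - a) * G c" using tc by simp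
  finally show ?thesis .
qed

context setting begin

lemma unbounded_case:
  assumes unb: "\<And>B. \<exists>x\<ge>X1. uu x > B"
    and U: "U \<ge> 0" and cvx: "convex_on {U<..} f"
    and der: "\<And>u. u > U \<Longrightarrow> (f has_real_derivative deriv f u) (at u)"
    and mono: "\<And>u v. U < u \<Longrightarrow> u \<le> v \<Longrightarrow> f v \<le> f u"
    and s1: "\<sigma>1 > 0" and s2: "\<sigma>2 > 0" and KU: "K > U"
    and key: "\<And>u. u \<ge> K \<Longrightarrow> f u - f (lam*u) \<le> (1-\<sigma>1)*(lam-1)*u*(- deriv f u)
            \<and> f (u/lam) - f u \<ge> (1+\<sigma>2)*(1-1/lam)*u*(- deriv f u)"
    and lam: "lam > 1"
  shows "\<exists>\<delta>>0. \<exists>x0\<ge>1. \<forall>x\<ge>x0. \<forall>u\<ge>0. (u \<ge> lam * uu x \<or> u \<le> uu x / lam) \<longrightarrow>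
           h f u x - u * f u \<ge> om x + \<delta> * uu x"
proof -
  have X1ge: "X1 \<ge> 1" using X1 exp_ge_add_one_self[of 1] by linarith
  have ev: "\<exists>xb\<ge>X1. \<forall>x\<ge>xb. uu x > B" for B
  proof -
    obtain xb where "xb \<ge> X1" "uu xb > B" using unb by blast
    moreover have "\<forall>x\<ge>xb. uu x > B" using calculation b6(1)[OF calculation(1)] by force
    ultimately show ?thesis by blast
  qed
  define T where "T = K"
  have T0: "T > 0" "T > U" using KU U by (auto simp: T_def)
  obtain xc where xc: "xc \<ge> X1" "uu xc > T + 1" using unb by blast
  define c where "c = 1 / ln xc"
  have lxc: "ln xc \<ge> 1" using lnx[OF xc(1)] .
  have c0: "c > 0" using lxc by (simp add: c_def)
  have fc: "f t \<ge> c" if "t \<ge> 0" "t \<le> T" for t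
  proof -
    have "om xc \<le> f t * ln xc + t" using b3[OF xc(1)] b2[OF xc(1) that(1)] by simp
    moreover have "uu xc \<le> om xc" using b5(1)[OF xc(1)] .
    ultimately have "1 \<le> f t * ln xc" using xc(2) that(2) by linarith
    hence "1 / ln xc \<le> f t" using lxc by (simp add: field_simps)
    thus ?thesis by (simp add: c_def)
  qed
  have fer: "- deriv f (uu x) * ln x = 1" if x: "x \<ge> X1" and ux: "uu x > U" for x
  proof -
    have d: "((\<lambda>u. f u * ln x + u) has_real_derivative (deriv f (uu x) * ln x + 1)) (at (uu x))"
      using der[OF ux] by (auto intro!: derivative_eq_intros)
    have u0p: "uu x > 0" using ux U by linarith
    have "\<forall>y. \<bar>uu x - y\<bar> < uu x \<longrightarrow> f (uu x) * ln x + uu x \<le> f y * ln x + y"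
    proof (intro allI impI)
      fix y assume "\<bar>uu x - y\<bar> < uu x"
      hence "y \<ge> 0" by linarith
      thus "f (uu x) * ln x + uu x \<le> f y * ln x + y" using b2[OF x] by blast
    qed
    from DERIV_local_min[OF d u0p this] show ?thesis by simp
  qed
  have fT: "f T > 0" using pos T0 by simp
  have ufb: "\<exists>C\<ge>0. \<forall>u\<ge>T. u * f u \<le> \<eta> * u + C" if eta: "\<eta> > 0" for \<eta>
  proof -
    have "\<forall>\<^sub>F u in at_top. f u < \<eta>" using order_tendstoD(2)[OF lim0 eta] .
    then obtain S0 where S0: "\<And>u. u \<ge> S0 \<Longrightarrow> f u < \<eta>" unfolding eventually_at_top_linorder by blast
    define S1 where "S1 = max S0 T"
    have "u * f u \<le> \<eta> * u + S1 * f T" if u: "u \<ge> T" for u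
    proof (cases "u \<ge> S1")
      case True
      hence "f u < \<eta>" using S0 by (simp add: S1_def)
      hence "u * f u \<le> u * \<eta>" using u T0 by (intro mult_left_mono) auto
      moreover have "S1 * f T \<ge> 0" using fT T0 by (simp add: S1_def)
      ultimately show ?thesis by (simp add: mult.commute)
    next
      case False
      have fu: "f u \<le> f T" using mono[OF T0(2) u] .
      have fu0: "f u > 0" using pos u T0 by simp
      have "u * f u \<le> u * f T" using fu u T0 by (intro mult_left_mono) auto
      also have "\<dots> \<le> S1 * f T" using False fT by (intro mult_right_mono) auto
      finally show ?thesis using eta u T0 by (smt (verit) mult_nonneg_nonneg)
    qed
    moreover have "S1 * f T \<ge> 0" using fT T0 by (simp add: S1_def)
    ultimately show ?thesis by blast
  qed
  define \<tau> where "\<tau> = \<sigma>2 * (1 - 1/lam)"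
  have ilam: "1 - 1/lam > 0" using lam by simp
  have tau0: "\<tau> > 0" using s2 ilam by (simp add: \<tau>_def)
  define \<eta>1 where "\<eta>1 = \<sigma>1 * (1 - 1/lam) / 2"
  define \<eta>2 where "\<eta>2 = \<tau> / 4"
  have e1: "\<eta>1 > 0" using s1 ilam by (simp add: \<eta>1_def)
  have e2: "\<eta>2 > 0" using tau0 by (simp add: \<eta>2_def)
  obtain C1 where C1: "C1 \<ge> 0" "\<And>u. u \<ge> T \<Longrightarrow> u * f u \<le> \<eta>1 * u + C1" using ufb[OF e1] by blast
  obtain C2 where C2: "C2 \<ge> 0" "\<And>u. u \<ge> T \<Longrightarrow> u * f u \<le> \<eta>2 * u + C2" using ufb[OF e2] by blast
  define \<delta> where "\<delta> = min 1 (min (\<sigma>1*(lam-1)/4) (\<tau>/2))"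
  have d0: "\<delta> > 0" using s1 lam tau0 by (simp add: \<delta>_def)
  have d1: "\<delta> \<le> 1" "\<delta> \<le> \<sigma>1*(lam-1)/4" "\<delta> \<le> \<tau>/2" by (simp_all add: \<delta>_def)
  have c4: "c/4 > 0" using c0 by simp
  obtain v where v: "v \<ge> 0" "\<And>x. x \<ge> X1 \<Longrightarrow> om x \<le> (c/4) * ln x + v" using b7[OF c4] by blast
  define M where "M = max (lam*K) (max (4*C1/(\<sigma>1*(lam-1))) (4*C2/\<tau>))"
  obtain xb where xb: "xb \<ge> X1" "\<And>x. x \<ge> xb \<Longrightarrow> uu x > M" using ev by blast
  define x0 where "x0 = max xb (exp (2*T + 4 * v / c))"
  have x0b: "x0 \<ge> xb" by (simp add: x0_def)
  have main: "h f u x - u * f u \<ge> om x + \<delta> * uu x"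
    if x: "x \<ge> x0" and u: "u \<ge> 0" and uc: "u \<ge> lam * uu x \<or> u \<le> uu x / lam" for x u
  proof -
    have xX: "x \<ge> X1" using x x0b xb(1) by linarith
    define L where "L = ln x"
    have L1: "L \<ge> 1" using lnx[OF xX] by (simp add: L_def)
    have LT: "L \<ge> 2*T + 4 * v / c" using ln_ge_of_exp[of "2*T + 4 * v / c" x] x by (simp add: x0_def L_def)
    define u0 where "u0 = uu x"
    have uM: "u0 > M" using xb(2)[of x] x x0b by (simp add: u0_def)
    have uK: "u0 \<ge> lam * K" "u0 \<ge> 4*C1/(\<sigma>1*(lam-1))" "u0 \<ge> 4*C2/\<tau>" using uM by (auto simp: M_def)
    have "lam * K \<ge> K" using lam KU U by simp
    hence u0K: "u0 \<ge> K" using uK(1) by linarith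
    have u0U: "u0 > U" using u0K KU by linarith
    have u0p: "u0 > 0" using u0U U by linarith
    define G where "G = (\<lambda>w. f w * L + w)"
    have Gh: "h f w x = G w" for w by (simp add: h_def G_def L_def)
    have om: "om x = G u0" using b3[OF xX] by (simp add: G_def L_def u0_def)
    have Gmin: "G u0 \<le> G w" if "w \<ge> 0" for w using b2[OF xX that] by (simp add: G_def L_def u0_def)
    have u0om: "u0 \<le> om x" using b5(1)[OF xX] by (simp add: u0_def)
    have cvG: "convex_on {U<..} G"
    proof -
      have "convex_on {U<..} (\<lambda>w. L * f w + w)"
        using L1 cvx by (intro convex_on_add convex_on_cmul) (auto simp: convex_on_ident)
      thus ?thesis by (simp add: G_def mult.commute)
    qed
    have dL: "- deriv f u0 * L = 1" using fer[OF xX] u0U by (simp add: u0_def L_def)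
    define d0 where "d0 = - deriv f u0"
    have dL': "d0 * L = 1" using dL by (simp add: d0_def)
    have hx: "h f u x - u * f u - om x = G u - G u0 - u * f u" using Gh om by simp
    show ?thesis
    proof (cases "u \<le> T")
      case True
      have fcu: "f u \<ge> c" using fc[OF u True] .
      have "2*T \<le> L" using LT v c0 by (smt (verit) divide_nonneg_pos)
      hence LTp: "L - u \<ge> L - T" "L - T \<ge> 0" using True T0 by linarith+
      have "h f u x - u * f u = f u * (L - u) + u" by (simp add: h_def L_def algebra_simps)
      also have "\<dots> \<ge> c * (L - T)"
      proof -
        have fu0: "f u > 0" using pos u by blast
        have "f u * (L - u) \<ge> c * (L - T)" using mult_mono[OF fcu LTp(1)] c0 LTp(2) fu0 by simp
        thus ?thesis using u by linarith
      qed
      finally have A: "h f u x - u * f u \<ge> c * (L - T)" .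
      have "c * L \<ge> c * (2*T + 4 * v / c)" using LT c0 by (intro mult_left_mono) auto
      moreover have "c * (2*T + 4 * v / c) = 2*c*T + 4 * v" using c0 by (simp add: distrib_left)
      ultimately have B: "c * L \<ge> 2*c*T + 4 * v" by simp
      have C: "om x \<le> (c/4) * L + v" using v(2)[OF xX] by (simp add: L_def)
      have D: "\<delta> * u0 \<le> om x" using mult_right_mono[OF d1(1) less_imp_le[OF u0p]] u0om by simp
      have "c * (L - T) = c * L - c * T" by (simp add: algebra_simps)
      thus ?thesis using A B C D by (simp add: u0_def)
    next
      case False
      hence uT: "u > T" by simp
      have uU: "u > U" using uT T0 by linarith
      show ?thesis
      proof (cases "u \<ge> lam * u0")
        case True
        have E1: "f u0 - f (lam*u0) \<le> (1-\<sigma>1)*(lam-1)*u0*d0" using key[OF u0K] by (simp add: d0_def)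
        have "(f u0 - f (lam*u0)) * L \<le> ((1-\<sigma>1)*(lam-1)*u0*d0) * L" using E1 L1 by (intro mult_right_mono) auto
        also have "\<dots> = (1-\<sigma>1)*(lam-1)*u0*(d0*L)" by (simp only: mult.assoc)
        also have "\<dots> = (1-\<sigma>1)*(lam-1)*u0" using dL' by simp
        finally have E1L: "(f u0 - f (lam*u0)) * L \<le> (1-\<sigma>1)*(lam-1)*u0" .
        have Glam: "G (lam*u0) - G u0 \<ge> \<sigma>1*(lam-1)*u0"
        proof -
          have "G (lam*u0) - G u0 = (lam-1)*u0 - (f u0 - f (lam*u0)) * L" by (simp add: G_def algebra_simps)
          thus ?thesis using E1L by (simp add: algebra_simps)
        qed
        have lu0: "lam*u0 > u0" using lam u0p by simp
        have Gu: "G u - G u0 \<ge> \<sigma>1*(u - u0)"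
        proof (cases "u = lam*u0")
          case True
          thus ?thesis using Glam by (simp add: algebra_simps)
        next
          case False
          hence ul: "lam*u0 < u" using \<open>u \<ge> lam*u0\<close> by simp
          have mem: "u0 \<in> {U<..}" "u \<in> {U<..}" using u0U uU by auto
          have cv: "G (lam*u0) * (u - u0) \<le> (u - lam*u0) * G u0 + (lam*u0 - u0) * G u"
            by (rule cvx3[OF cvG mem(1) mem(2) lu0 ul])
          hence "(G (lam*u0) - G u0) * (u - u0) \<le> ((lam-1)*u0) * (G u - G u0)"
            by (simp add: algebra_simps)
          moreover have "(\<sigma>1*(lam-1)*u0) * (u - u0) \<le> (G (lam*u0) - G u0) * (u - u0)"
            using Glam lu0 ul by (intro mult_right_mono) auto
          ultimately have "((lam-1)*u0) * (\<sigma>1*(u - u0)) \<le> ((lam-1)*u0) * (G u - G u0)"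
            by (simp add: algebra_simps)
          moreover have "(lam-1)*u0 > 0" using lam u0p by simp
          ultimately show ?thesis by (rule mult_left_le_imp_le)
        qed
        have ufu: "u * f u \<le> \<eta>1 * u + C1" using C1(2) uT by simp
        have u0u: "u0 \<le> u / lam" using True lam by (simp add: field_simps)
        have "\<sigma>1 * (u - u0) \<ge> \<sigma>1 * (u - u/lam)" using u0u s1 by (intro mult_left_mono) auto
        moreover have "\<sigma>1 * (u - u/lam) = 2 * \<eta>1 * u" by (simp add: \<eta>1_def algebra_simps)
        moreover have "\<eta>1 * u \<ge> \<eta>1 * (lam * u0)" using True e1 by (intro mult_left_mono) auto
        moreover have "\<eta>1 * (lam * u0) = \<sigma>1*(lam-1)/2 * u0" using lam by (simp add: \<eta>1_def field_simps)
        moreover have "C1 \<le> \<sigma>1*(lam-1)/4 * u0"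
        proof -
          have p: "\<sigma>1*(lam-1) > 0" using s1 lam by simp
          have "4*C1/(\<sigma>1*(lam-1)) \<le> u0" using uK(2) .
          hence "4*C1 \<le> u0 * (\<sigma>1*(lam-1))" using p by (simp add: divide_le_eq)
          thus ?thesis by (simp add: algebra_simps)
        qed
        moreover have "\<delta> * u0 \<le> \<sigma>1*(lam-1)/4 * u0" using d1(2) u0p by (intro mult_right_mono) auto
        ultimately have "G u - G u0 - u * f u \<ge> \<delta> * u0" using Gu ufu by linarith
        thus ?thesis using hx by (simp add: u0_def)
      next
        case False
        hence ul: "u \<le> u0 / lam" using uc by (simp add: u0_def)
        have E2: "f (u0/lam) - f u0 \<ge> (1+\<sigma>2)*(1-1/lam)*u0*d0" using key[OF u0K] by (simp add: d0_def)
        have "((1+\<sigma>2)*(1-1/lam)*u0*d0) * L \<le> (f (u0/lam) - f u0) * L" using E2 L1 by (intro mult_right_mono) auto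
        moreover have "((1+\<sigma>2)*(1-1/lam)*u0*d0) * L = (1+\<sigma>2)*(1-1/lam)*u0*(d0*L)" by (simp only: mult.assoc)
        moreover have "(1+\<sigma>2)*(1-1/lam)*u0*(d0*L) = (1+\<sigma>2)*(1-1/lam)*u0" using dL' by simp
        ultimately have E2L: "(f (u0/lam) - f u0) * L \<ge> (1+\<sigma>2)*(1-1/lam)*u0" by simp
        have Gl: "G (u0/lam) - G u0 \<ge> \<tau> * u0"
        proof -
          have "G (u0/lam) - G u0 = (f (u0/lam) - f u0) * L - (1 - 1/lam)*u0" by (simp add: G_def algebra_simps)
          moreover have "\<tau> * u0 = (1+\<sigma>2)*(1-1/lam)*u0 - (1-1/lam)*u0" by (simp add: \<tau>_def algebra_simps add_divide_distrib)
          ultimately show ?thesis using E2L by linarith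
        qed
        have ulu0: "u0/lam < u0" using lam u0p by (simp add: divide_less_eq)
        have GG: "G u \<ge> G (u0/lam)"
        proof (cases "u = u0/lam")
          case True thus ?thesis by simp
        next
          case False
          hence ul': "u < u0/lam" using ul by simp
          have mem: "u \<in> {U<..}" "u0 \<in> {U<..}" using uU u0U by auto
          have cv: "G (u0/lam) * (u0 - u) \<le> (u0 - u0/lam) * G u + (u0/lam - u) * G u0"
            by (rule cvx3[OF cvG mem(1) mem(2) ul' ulu0])
          moreover have "(u0/lam - u) * G u0 \<le> (u0/lam - u) * G u" using Gmin[OF u] ul' by (intro mult_left_mono) auto
          ultimately have "G (u0/lam) * (u0 - u) \<le> G u * (u0 - u)" by (simp add: algebra_simps)
          moreover have "u0 - u > 0" using ul' ulu0 by linarith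
          ultimately show ?thesis by (rule mult_right_le_imp_le)
        qed
        have ufu: "u * f u \<le> \<eta>2 * u + C2" using C2(2) uT by simp
        have uu0: "u \<le> u0" using ul ulu0 by linarith
        have "\<eta>2 * u \<le> \<eta>2 * u0" using uu0 e2 by (intro mult_left_mono) auto
        moreover have "C2 \<le> \<tau>/4 * u0"
        proof -
          have "4*C2/\<tau> \<le> u0" using uK(3) .
          hence "4*C2 \<le> u0 * \<tau>" using tau0 by (simp add: divide_le_eq)
          thus ?thesis by (simp add: algebra_simps)
        qed
        moreover have "\<delta> * u0 \<le> \<tau>/2 * u0" using d1(3) u0p by (intro mult_right_mono) auto
        moreover have "\<eta>2 * u0 = \<tau>/4 * u0" by (simp add: \<eta>2_def)
        ultimately have "G u - G u0 - u * f u \<ge> \<delta> * u0" using GG Gl ufu by linarith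
        thus ?thesis using hx by (simp add: u0_def)
      qed
    qed
  qed
  have "x0 \<ge> 1" using x0b xb(1) X1ge by linarith
  thus ?thesis using main d0 by blast
qed

end

theorem lemma2p1:
  fixes f :: "real \<Rightarrow> real"
  assumes pos: "\<forall>u\<ge>0. f u > 0"
    and lim0: "(f \<longlongrightarrow> 0) at_top"
    and eventually_nice: "\<exists>U\<ge>0. (\<forall>u>U. f differentiable (at u))
            \<and> continuous_on {U<..} (deriv f)
            \<and> (\<forall>u v. U < u \<and> u \<le> v \<longrightarrow> f v \<le> f u)
            \<and> strictly_convex_on {U<..} f"
    and variation: "(\<exists>\<alpha>. 0 < \<alpha> \<and> \<alpha> \<le> 1 \<and> regularly_varying \<alpha> f)
            \<or> (slowly_varying f \<and>
               (\<forall>\<delta>>0. Limsup at_top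
                  (\<lambda>u. ereal (\<bar>deriv f ((1 + \<delta>) * u)\<bar> / \<bar>deriv f u\<bar>)) < 1))"
    and u0_unique: "\<forall>\<^sub>F x in at_top. \<exists>!u. u \<ge> 0 \<and> (\<forall>v\<ge>0. h f u x \<le> h f v x)"
  shows "\<forall>lam>1. \<exists>\<delta>>0. \<exists>x0\<ge>1. \<forall>x\<ge>x0. \<forall>u\<ge>0.
           (u \<ge> lam * u0 f x \<or> u \<le> u0 f x / lam) \<longrightarrow>
           h f u x - u * f u \<ge> omega f x + \<delta> * u0 f x"
proof (intro allI impI)
  fix lam :: real assume lam: "lam > 1"
  obtain U where U: "U \<ge> 0" and cvx: "convex_on {U<..} f"
    and der: "\<And>u. u > U \<Longrightarrow> (f has_real_derivative deriv f u) (at u)"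
    and neg: "\<And>u. u > U \<Longrightarrow> deriv f u < 0"
    and mono: "\<And>u v. U < u \<Longrightarrow> u \<le> v \<Longrightarrow> f v \<le> f u"
    and tan: "\<And>u v. U < u \<Longrightarrow> U < v \<Longrightarrow> f v \<ge> f u + deriv f u * (v - u)"
    using tail_setup[OF eventually_nice] by blast
  have tan': "\<And>u v. U < u \<Longrightarrow> U < v \<Longrightarrow> f v \<ge> f u - (- deriv f u) * (v - u)"
    using tan by simp
  have "\<exists>\<sigma>1>0. \<exists>\<sigma>2>0. \<exists>K>U. \<forall>u\<ge>K. f u - f (lam*u) \<le> (1-\<sigma>1)*(lam-1)*u*(- deriv f u)
            \<and> f (u/lam) - f u \<ge> (1+\<sigma>2)*(1-1/lam)*u*(- deriv f u)"
    using variation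
  proof
    assume "\<exists>\<alpha>. 0 < \<alpha> \<and> \<alpha> \<le> 1 \<and> regularly_varying \<alpha> f"
    then obtain a where a: "a > 0" "regularly_varying a f" by blast
    show ?thesis using key_reg[where D = "\<lambda>u. - deriv f u", OF U tan' pos a(1) a(2) lam] by simp
  next
    assume "slowly_varying f \<and> (\<forall>\<delta>>0. Limsup at_top
                  (\<lambda>u. ereal (\<bar>deriv f ((1 + \<delta>) * u)\<bar> / \<bar>deriv f u\<bar>)) < 1)"
    hence ls: "\<forall>\<delta>>0. Limsup at_top
                  (\<lambda>u. ereal (\<bar>deriv f ((1 + \<delta>) * u)\<bar> / \<bar>deriv f u\<bar>)) < 1" by blast
    show ?thesis by (rule key_slow[OF U neg tan' ls lam])
  qed
  then obtain \<sigma>1 \<sigma>2 K where s1: "\<sigma>1 > 0" and s2: "\<sigma>2 > 0" and KU: "K > U"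
    and key: "\<And>u. u \<ge> K \<Longrightarrow> f u - f (lam*u) \<le> (1-\<sigma>1)*(lam-1)*u*(- deriv f u)
            \<and> f (u/lam) - f u \<ge> (1+\<sigma>2)*(1-1/lam)*u*(- deriv f u)"
    by blast
  obtain X0 where X0: "\<And>x. x \<ge> X0 \<Longrightarrow> \<exists>!u. u \<ge> 0 \<and> (\<forall>v\<ge>0. h f u x \<le> h f v x)"
    using u0_unique unfolding eventually_at_top_linorder by blast
  define X1 where "X1 = max X0 (exp 1)"
  interpret S: setting f X1
  proof
    show "exp 1 \<le> X1" by (simp add: X1_def)
    show "\<forall>u\<ge>0. f u > 0" using pos .
    show "(f \<longlongrightarrow> 0) at_top" using lim0 .
    fix x assume "x \<ge> X1"
    hence "x \<ge> X0" by (simp add: X1_def)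
    note P = u0_props[OF X0[OF this]]
    show "u0 f x \<ge> 0 \<and> (\<forall>v\<ge>0. h f (u0 f x) x \<le> h f v x) \<and> omega f x = h f (u0 f x) x"
      using P by blast
  qed
  show "\<exists>\<delta>>0. \<exists>x0\<ge>1. \<forall>x\<ge>x0. \<forall>u\<ge>0.
           (u \<ge> lam * u0 f x \<or> u \<le> u0 f x / lam) \<longrightarrow>
           h f u x - u * f u \<ge> omega f x + \<delta> * u0 f x"
  proof (cases "\<exists>B. \<forall>x\<ge>X1. u0 f x \<le> B")
    case True
    then obtain B where B: "\<And>x. x \<ge> X1 \<Longrightarrow> u0 f x \<le> B" by blast
    show ?thesis by (rule S.bounded_case[OF B lam])
  next
    case False
    hence unb: "\<And>B. \<exists>x\<ge>X1. u0 f x > B" by (meson not_le)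
    show ?thesis by (rule S.unbounded_case[OF unb U cvx der mono s1 s2 KU key lam])
  qed
qed

end
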